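(* The map $\phi_{\mathcal{M}}:(m,f)\mapsto m\,\phi^1(f)$ is an injective morphism of set-operads from $\mathcal{MFF}=\mathrm{Mon}\times\mathcal{FF}$ to the set-operad underlying $\mathrm{Mould}_1$; it is also an injective morphism of symmetric set-operads between the symmetric versions.
   Context: $\mathrm{Mon}(n)$ is the set of monomials in $u_1,\dots,u_n$ (including $1$), with composition, for $F\in\mathrm{Mon}(m)$, $G\in\mathrm{Mon}(n)$: $F\circ_iG=F(u_1,\dots,u_{i-1},\Pi_{i,n},u_{i+n},\dots,u_{m+n-1})\,G(u_i,\dots,u_{i+n-1})$ where $\Pi_{i,n}=u_iu_{i+1}\cdots u_{i+n-1}$; $S_n$ acts by permuting variables. $\mathcal{FF}(n)$ is the set of reduced formal fractions whose numerator and denominator are products of symbols $[S]$, $\emptyset\ne S\subseteq[n]$, with $F\circ_iG=[S_{i,n}]\,F(1,\dots,i-1,S_{i,n},i+n,\dots,m+n-1)\,G(i,\dots,i+n-1)$, $S_{i,n}=\{i,\dots,i+n-1\}$, where $F(A_1,\dots,A_m)$ replaces each $[S]$ by $[\bigcup_{k\in S}A_k]$; $S_n$ acts by $[S]\mapsto[\sigma(S)]$. $\mathcal{MFF}$ is the Hadamard product: $\mathcal{MFF}(n)=\mathrm{Mon}(n)\times\mathcal{FF}(n)$ with componentwise composition and action. $\mathrm{Mould}_1(n)=\mathbb{Q}(u_1,\dots,u_n)$ with $F\circ_iG=(\Pi_{i,n}-1)F(u_1,\dots,u_{i-1},\Pi_{i,n},u_{i+n},\dots,u_{m+n-1})G(u_i,\dots,u_{i+n-1})$,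 $S_n$ permuting variables. $\phi^1$ sends $[S]$ to $\prod_{j\in S}u_j-1$, extended multiplicatively. *)

theory Defs
  imports Complex_Main "HOL-Library.Poly_Mapping" "HOL-Computational_Algebra.Fraction_Field"
          "HOL-Combinatorics.Permutations"
begin

text \<open>Polynomials over Q in the variables u_1, u_2, ... (index 0 unused),
  as finitely supported maps from exponent vectors to coefficients;
  rational functions are their fraction field.\<close>

type_synonym mpoly = "(nat \<Rightarrow>\<^sub>0 nat) \<Rightarrow>\<^sub>0 rat"
type_synonym ratfun = "mpoly fract"

definition Var :: "nat \<Rightarrow> mpoly" where
  "Var j = Poly_Mapping.single (Poly_Mapping.single j 1) 1"

definition mpoly_vars :: "mpoly \<Rightarrow> nat set" where
  "mpoly_vars p = \<Union> (Poly_Mapping.keys ` Poly_Mapping.keys p)"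

definition peval :: "(nat \<Rightarrow> mpoly) \<Rightarrow> mpoly \<Rightarrow> mpoly" where
  "peval \<sigma> p = (\<Sum>e\<in>Poly_Mapping.keys p. Poly_Mapping.single 0 (Poly_Mapping.lookup p e) * (\<Prod>j\<in>Poly_Mapping.keys e. \<sigma> j ^ Poly_Mapping.lookup e j))"

definition poly_to_rf :: "mpoly \<Rightarrow> ratfun" where
  "poly_to_rf p = Fract p 1"

text \<open>Substitution in a rational function (well defined for the injective
  monomial substitutions used below).\<close>
definition rsubst :: "(nat \<Rightarrow> mpoly) \<Rightarrow> ratfun \<Rightarrow> ratfun" where
  "rsubst \<sigma> x = (let (p, q) = (SOME (p, q). q \<noteq> 0 \<and> x = Fract p q)
                  in Fract (peval \<sigma> p) (peval \<sigma> q))"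

definition Mould1 :: "nat \<Rightarrow> ratfun set" where
  "Mould1 n = {x. \<exists>p q. q \<noteq> 0 \<and> mpoly_vars p \<subseteq> {1..n} \<and> mpoly_vars q \<subseteq> {1..n}
                        \<and> x = Fract p q}"

definition PiV :: "nat \<Rightarrow> nat \<Rightarrow> mpoly" where
  "PiV i n = (\<Prod>j\<in>{i..i+n-1}. Var j)"

definition mould_comp :: "nat \<Rightarrow> nat \<Rightarrow> ratfun \<Rightarrow> ratfun \<Rightarrow> ratfun" where
  "mould_comp i n F G =
     poly_to_rf (PiV i n - 1)
     * rsubst (\<lambda>j. if j < i then Var j else if j = i then PiV i n else Var (j + n - 1)) F
     * rsubst (\<lambda>k. Var (k + i - 1)) G"

definition mould_act :: "(nat \<Rightarrow> nat) \<Rightarrow> ratfun \<Rightarrow> ratfun" where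
  "mould_act \<sigma> F = rsubst (\<lambda>j. Var (\<sigma> j)) F"

definition mould_unit :: ratfun where
  "mould_unit = inverse (poly_to_rf (Var 1 - 1))"

text \<open>A monomial u_1^{e 1} ... u_n^{e n} is represented by its exponent function e.\<close>
definition Mon :: "nat \<Rightarrow> (nat \<Rightarrow> nat) set" where
  "Mon n = {e. \<forall>j. e j \<noteq> 0 \<longrightarrow> j \<in> {1..n}}"

definition mon_comp :: "nat \<Rightarrow> nat \<Rightarrow> (nat \<Rightarrow> nat) \<Rightarrow> (nat \<Rightarrow> nat) \<Rightarrow> (nat \<Rightarrow> nat)" where
  "mon_comp i n F G = (\<lambda>k. if k < i then F k
                           else if k < i + n then F i + G (k + 1 - i)
                           else F (k + 1 - n))"

definition mon_act :: "(nat \<Rightarrow> nat) \<Rightarrow> (nat \<Rightarrow> nat) \<Rightarrow> (nat \<Rightarrow> nat)" where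
  "mon_act \<sigma> e = (\<lambda>k. e (inv \<sigma> k))"

definition mon_unit :: "nat \<Rightarrow> nat" where
  "mon_unit = (\<lambda>_. 0)"

definition mon_to_rf :: "(nat \<Rightarrow> nat) \<Rightarrow> ratfun" where
  "mon_to_rf e = poly_to_rf (\<Prod>j\<in>{j. e j \<noteq> 0}. Var j ^ e j)"

text \<open>A reduced formal fraction prod_S [S]^{f S} is represented by its
  integer exponent function f, supported on nonempty subsets of [n].\<close>
definition FF :: "nat \<Rightarrow> (nat set \<Rightarrow> int) set" where
  "FF n = {f. \<forall>S. f S \<noteq> 0 \<longrightarrow> S \<noteq> {} \<and> S \<subseteq> {1..n}}"

definition ff_block :: "nat \<Rightarrow> nat \<Rightarrow> nat \<Rightarrow> nat set" where
  "ff_block i n k = (if k < i then {k} else if k = i then {i..i+n-1} else {k + n - 1})"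

definition ff_comp :: "nat \<Rightarrow> nat \<Rightarrow> nat \<Rightarrow> (nat set \<Rightarrow> int) \<Rightarrow> (nat set \<Rightarrow> int) \<Rightarrow> (nat set \<Rightarrow> int)" where
  "ff_comp m i n F G = (\<lambda>T.
      (if T = {i..i+n-1} then 1 else 0)
      + (\<Sum>S\<in>{S. S \<subseteq> {1..m} \<and> (\<Union>k\<in>S. ff_block i n k) = T}. F S)
      + (\<Sum>S\<in>{S. S \<subseteq> {1..n} \<and> (\<lambda>k. k + i - 1) ` S = T}. G S))"

definition ff_act :: "(nat \<Rightarrow> nat) \<Rightarrow> (nat set \<Rightarrow> int) \<Rightarrow> (nat set \<Rightarrow> int)" where
  "ff_act \<sigma> f = (\<lambda>T. f (inv \<sigma> ` T))"

definition ff_unit :: "nat set \<Rightarrow> int" where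
  "ff_unit = (\<lambda>S. if S = {1} then -1 else 0)"

definition phi1 :: "(nat set \<Rightarrow> int) \<Rightarrow> ratfun" where
  "phi1 f = (\<Prod>S\<in>{S. f S \<noteq> 0}. poly_to_rf ((\<Prod>j\<in>S. Var j) - 1) powi f S)"

type_synonym mff = "(nat \<Rightarrow> nat) \<times> (nat set \<Rightarrow> int)"

definition MFF :: "nat \<Rightarrow> mff set" where
  "MFF n = Mon n \<times> FF n"

definition mff_comp :: "nat \<Rightarrow> nat \<Rightarrow> nat \<Rightarrow> mff \<Rightarrow> mff \<Rightarrow> mff" where
  "mff_comp m i n x y = (mon_comp i n (fst x) (fst y), ff_comp m i n (snd x) (snd y))"

definition mff_act :: "(nat \<Rightarrow> nat) \<Rightarrow> mff \<Rightarrow> mff" where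
  "mff_act \<sigma> x = (mon_act \<sigma> (fst x), ff_act \<sigma> (snd x))"

definition mff_unit :: mff where
  "mff_unit = (mon_unit, ff_unit)"

definition phiM :: "mff \<Rightarrow> ratfun" where
  "phiM x = mon_to_rf (fst x) * phi1 (snd x)"

end

theory Submission
  imports Defs "HOL-Library.Nat_Bijection" "HOL-Computational_Algebra.Polynomial"
begin

definition rhom :: "(rat \<Rightarrow> 'a::comm_ring_1) \<Rightarrow> bool" where
  "rhom h \<longleftrightarrow> h 0 = 0 \<and> h 1 = 1 \<and> (\<forall>a b. h (a + b) = h a + h b) \<and> (\<forall>a b. h (a * b) = h a * h b)"

definition gmon :: "(nat \<Rightarrow> 'a::comm_ring_1) \<Rightarrow> (nat \<Rightarrow>\<^sub>0 nat) \<Rightarrow> 'a" where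
  "gmon \<sigma> e = (\<Prod>j\<in>Poly_Mapping.keys e. \<sigma> j ^ Poly_Mapping.lookup e j)"

definition geval :: "(rat \<Rightarrow> 'a::comm_ring_1) \<Rightarrow> (nat \<Rightarrow> 'a) \<Rightarrow> mpoly \<Rightarrow> 'a" where
  "geval h \<sigma> p = (\<Sum>e\<in>Poly_Mapping.keys p. h (Poly_Mapping.lookup p e) * gmon \<sigma> e)"

lemma peval_geval: "peval \<sigma> p = geval (Poly_Mapping.single 0) \<sigma> p"
  unfolding peval_def geval_def gmon_def ..

lemma rhom_single: "rhom (Poly_Mapping.single 0 :: rat \<Rightarrow> mpoly)"
  unfolding rhom_def by (simp add: single_add mult_single)

lemma rhom_pCons: "rhom (\<lambda>c::rat. [:c:])"
  unfolding rhom_def by simp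

lemma gmon_superset:
  assumes "finite B" "Poly_Mapping.keys e \<subseteq> B"
  shows "gmon \<sigma> e = (\<Prod>j\<in>B. \<sigma> j ^ Poly_Mapping.lookup e j)"
  unfolding gmon_def
  by (rule prod.mono_neutral_left) (use assms in \<open>auto simp: in_keys_iff\<close>)

lemma gmon_add: "gmon \<sigma> (a + b) = gmon \<sigma> a * gmon \<sigma> b"
proof -
  let ?B = "Poly_Mapping.keys a \<union> Poly_Mapping.keys b"
  have "gmon \<sigma> (a + b) = (\<Prod>j\<in>?B. \<sigma> j ^ Poly_Mapping.lookup (a+b) j)"
    by (rule gmon_superset) (auto dest: keys_add[THEN subsetD])
  also have "\<dots> = (\<Prod>j\<in>?B. \<sigma> j ^ Poly_Mapping.lookup a j) * (\<Prod>j\<in>?B. \<sigma> j ^ Poly_Mapping.lookup b j)"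
    by (simp add: lookup_add power_add prod.distrib)
  also have "\<dots> = gmon \<sigma> a * gmon \<sigma> b"
    by (simp add: gmon_superset[where B="?B"])
  finally show ?thesis .
qed

lemma gmon_zero [simp]: "gmon \<sigma> 0 = 1"
  by (simp add: gmon_def)

lemma mpoly_expand: "p = (\<Sum>e\<in>Poly_Mapping.keys (p::'b \<Rightarrow>\<^sub>0 'c::comm_monoid_add). Poly_Mapping.single e (Poly_Mapping.lookup p e))"
  by (rule poly_mapping_eqI) (auto simp: lookup_sum lookup_single when_def in_keys_iff
        intro!: trans[OF _ sum.delta[of "Poly_Mapping.keys p" _ "Poly_Mapping.lookup p", symmetric]] split: if_splits)


context fixes h :: "rat \<Rightarrow> 'a::comm_ring_1" assumes h: "rhom h"
begin

lemma h0[simp]: "h 0 = 0" and h1[simp]: "h 1 = 1" and hadd: "h (a+b) = h a + h b" and hmult: "h (a*b) = h a * h b"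
  using h unfolding rhom_def by auto

lemma geval_superset:
  assumes "finite A" "Poly_Mapping.keys p \<subseteq> A"
  shows "geval h \<sigma> p = (\<Sum>e\<in>A. h (Poly_Mapping.lookup p e) * gmon \<sigma> e)"
  unfolding geval_def
  by (rule sum.mono_neutral_left) (use assms in \<open>auto simp: in_keys_iff\<close>)

lemma geval_add: "geval h \<sigma> (p + q) = geval h \<sigma> p + geval h \<sigma> q"
proof -
  let ?A = "Poly_Mapping.keys p \<union> Poly_Mapping.keys q"
  have "geval h \<sigma> (p + q) = (\<Sum>e\<in>?A. h (Poly_Mapping.lookup (p+q) e) * gmon \<sigma> e)"
    by (rule geval_superset) (auto dest: keys_add[THEN subsetD])
  also have "\<dots> = (\<Sum>e\<in>?A. h (Poly_Mapping.lookup p e) * gmon \<sigma> e) + (\<Sum>e\<in>?A. h (Poly_Mapping.lookup q e) * gmon \<sigma> e)"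
    by (simp add: lookup_add hadd distrib_right sum.distrib)
  also have "\<dots> = geval h \<sigma> p + geval h \<sigma> q"
    by (simp add: geval_superset[where A="?A"])
  finally show ?thesis .
qed

lemma geval_zero[simp]: "geval h \<sigma> 0 = 0"
  by (simp add: geval_def)

lemma geval_sum: "geval h \<sigma> (sum f A) = (\<Sum>x\<in>A. geval h \<sigma> (f x))"
  by (induction A rule: infinite_finite_induct) (auto simp: geval_add)

lemma geval_single: "geval h \<sigma> (Poly_Mapping.single e c) = h c * gmon \<sigma> e"
proof -
  have "geval h \<sigma> (Poly_Mapping.single e c) = (\<Sum>e'\<in>{e}. h (Poly_Mapping.lookup (Poly_Mapping.single e c) e') * gmon \<sigma> e')"
    by (rule geval_superset) auto
  then show ?thesis by simp
qed


lemma geval_mult: "geval h \<sigma> (p * q) = geval h \<sigma> p * geval h \<sigma> q"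
proof -
  let ?Kp = "Poly_Mapping.keys p" and ?Kq = "Poly_Mapping.keys q"
  have "p * q = (\<Sum>a\<in>?Kp. Poly_Mapping.single a (Poly_Mapping.lookup p a)) * (\<Sum>b\<in>?Kq. Poly_Mapping.single b (Poly_Mapping.lookup q b))"
    by (simp only: mpoly_expand[symmetric])
  also have "\<dots> = (\<Sum>a\<in>?Kp. \<Sum>b\<in>?Kq. Poly_Mapping.single (a+b) (Poly_Mapping.lookup p a * Poly_Mapping.lookup q b))"
    by (simp add: sum_product mult_single)
  finally have "geval h \<sigma> (p*q) = (\<Sum>a\<in>?Kp. \<Sum>b\<in>?Kq. (h (Poly_Mapping.lookup p a) * gmon \<sigma> a) * (h (Poly_Mapping.lookup q b) * gmon \<sigma> b))"
    by (simp add: geval_sum geval_single hmult gmon_add algebra_simps)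
  also have "\<dots> = geval h \<sigma> p * geval h \<sigma> q"
    by (simp add: geval_def sum_product)
  finally show ?thesis .
qed

lemma geval_one[simp]: "geval h \<sigma> 1 = 1"
  using geval_single[where e=0 and c=1] by simp

lemma geval_minus: "geval h \<sigma> (- p) = - geval h \<sigma> p"
  using geval_add[where p="-p" and q=p] by (simp add: eq_neg_iff_add_eq_0)

lemma geval_diff: "geval h \<sigma> (p - q) = geval h \<sigma> p - geval h \<sigma> q"
  using geval_add[where p=p and q="-q"] geval_minus[where p=q] by simp

lemma geval_power: "geval h \<sigma> (p ^ k) = geval h \<sigma> p ^ k"
  by (induction k) (auto simp: geval_mult)

lemma geval_prod: "geval h \<sigma> (prod f A) = (\<Prod>x\<in>A. geval h \<sigma> (f x))"
  by (induction A rule: infinite_finite_induct) (auto simp: geval_mult)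

lemma geval_Var[simp]: "geval h \<sigma> (Var j) = \<sigma> j"
  by (simp add: Var_def geval_single gmon_def)

lemma geval_const: "geval h \<sigma> (Poly_Mapping.single 0 c) = h c"
  by (simp add: geval_single)

lemma geval_peval: "geval h \<tau> (peval \<sigma> p) = geval h (\<lambda>j. geval h \<tau> (\<sigma> j)) p"
proof -
  have "geval h \<tau> (peval \<sigma> p) = (\<Sum>e\<in>Poly_Mapping.keys p. h (Poly_Mapping.lookup p e) * (\<Prod>j\<in>Poly_Mapping.keys e. geval h \<tau> (\<sigma> j) ^ Poly_Mapping.lookup e j))"
    by (simp only: peval_def geval_sum geval_mult geval_const geval_prod geval_power)
  then show ?thesis by (simp only: geval_def[where \<sigma>="\<lambda>j. geval h \<tau> (\<sigma> j)"] gmon_def)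
qed

end

lemma Var_power: "Var j ^ k = Poly_Mapping.single (Poly_Mapping.single j k) 1"
  by (induction k) (auto simp: Var_def mult_single single_add[symmetric] add.commute)

lemma prod_single1: "(\<Prod>x\<in>A. Poly_Mapping.single (f x) (1::rat)) = Poly_Mapping.single (\<Sum>x\<in>A. f x) 1"
  by (induction A rule: infinite_finite_induct) (auto simp: mult_single)

lemma peval_Var: "peval Var p = p"
proof -
  have m: "gmon Var e = Poly_Mapping.single e 1" for e
    by (simp add: gmon_def Var_power prod_single1 mpoly_expand[symmetric])
  show ?thesis
    unfolding peval_geval geval_def m mult_single
    by (simp, rule mpoly_expand[symmetric])
qed


lemmas peval_add = geval_add[OF rhom_single, folded peval_geval]
lemmas peval_mult = geval_mult[OF rhom_single, folded peval_geval]
lemmas peval_one[simp] = geval_one[OF rhom_single, folded peval_geval]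
lemmas peval_zero[simp] = geval_zero[OF rhom_single, folded peval_geval]
lemmas peval_diff = geval_diff[OF rhom_single, folded peval_geval]
lemmas peval_power = geval_power[OF rhom_single, folded peval_geval]
lemmas peval_prod = geval_prod[OF rhom_single, folded peval_geval]
lemmas peval_Var_at[simp] = geval_Var[OF rhom_single, folded peval_geval]
lemmas peval_peval = geval_peval[OF rhom_single, folded peval_geval]

definition good :: "(nat \<Rightarrow> mpoly) \<Rightarrow> bool" where
  "good \<sigma> \<longleftrightarrow> (\<forall>q. q \<noteq> 0 \<longrightarrow> peval \<sigma> q \<noteq> 0)"

lemma good_by_inverse:
  assumes "(\<lambda>j. peval \<tau> (\<sigma> j)) = Var"
  shows "good \<sigma>"
  unfolding good_def
proof (intro allI impI notI)
  fix q :: mpoly assume "q \<noteq> 0" "peval \<sigma> q = 0"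
  then have "peval \<tau> (peval \<sigma> q) = 0" by simp
  then show False using \<open>q \<noteq> 0\<close> by (simp add: peval_peval assms peval_Var)
qed

lemma rsubst_Fract:
  assumes "good \<sigma>" "q \<noteq> 0"
  shows "rsubst \<sigma> (Fract p q) = Fract (peval \<sigma> p) (peval \<sigma> q)"
proof -
  define pq where "pq = (SOME (p', q'). q' \<noteq> 0 \<and> Fract p q = Fract p' q')"
  have ex: "\<exists>x. (\<lambda>(p', q'). q' \<noteq> 0 \<and> Fract p q = Fract p' q') x"
    using assms by auto
  have "(\<lambda>(p', q'). q' \<noteq> 0 \<and> Fract p q = Fract p' q') pq"
    unfolding pq_def by (rule someI_ex[OF ex])
  then obtain p' q' where pq: "pq = (p', q')" "q' \<noteq> 0" "Fract p q = Fract p' q'"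
    by (cases pq) auto
  have e: "p * q' = p' * q" using pq assms eq_fract(1) by blast
  have "peval \<sigma> p * peval \<sigma> q' = peval \<sigma> p' * peval \<sigma> q"
    using e by (metis peval_mult)
  moreover have "peval \<sigma> q \<noteq> 0" "peval \<sigma> q' \<noteq> 0" using assms pq unfolding good_def by auto
  ultimately have "Fract (peval \<sigma> p') (peval \<sigma> q') = Fract (peval \<sigma> p) (peval \<sigma> q)"
    by (simp add: eq_fract)
  moreover have "(SOME (p', q'). q' \<noteq> 0 \<and> Fract p q = Fract p' q') = (p', q')"
    using pq pq_def by simp
  ultimately show ?thesis
    unfolding rsubst_def by (simp add: eq_commute[of "Fract p q"])
qed

lemma rsubst_poly: "good \<sigma> \<Longrightarrow> rsubst \<sigma> (poly_to_rf p) = poly_to_rf (peval \<sigma> p)"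
  by (simp add: poly_to_rf_def rsubst_Fract)

lemma rsubst_mult: "good \<sigma> \<Longrightarrow> rsubst \<sigma> (x * y) = rsubst \<sigma> x * rsubst \<sigma> y"
  by (cases x; cases y) (simp add: rsubst_Fract peval_mult)

lemma rsubst_one[simp]: "good \<sigma> \<Longrightarrow> rsubst \<sigma> 1 = 1"
  by (simp add: One_fract_def rsubst_Fract)

lemma rsubst_inverse: "good \<sigma> \<Longrightarrow> rsubst \<sigma> (inverse x) = inverse (rsubst \<sigma> x)"
proof (cases x)
  case (Fract a b)
  assume g: "good \<sigma>"
  show ?thesis
  proof (cases "a = 0")
    case True then show ?thesis using Fract g by (simp add: rsubst_Fract eq_fract(2))
  next
    case False then show ?thesis using Fract g by (simp add: rsubst_Fract)
  qed
qed

lemma rsubst_power: "good \<sigma> \<Longrightarrow> rsubst \<sigma> (x ^ k) = rsubst \<sigma> x ^ k"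
  by (induction k) (simp_all add: rsubst_mult)

lemma rsubst_powi: "good \<sigma> \<Longrightarrow> rsubst \<sigma> (x powi k) = rsubst \<sigma> x powi k"
  by (simp add: power_int_def rsubst_power rsubst_inverse)

lemma rsubst_prod: "good \<sigma> \<Longrightarrow> rsubst \<sigma> (prod f A) = (\<Prod>x\<in>A. rsubst \<sigma> (f x))"
  by (induction A rule: infinite_finite_induct) (simp_all add: rsubst_mult)

lemma poly_to_rf_mult: "poly_to_rf (p * q) = poly_to_rf p * poly_to_rf q"
  by (simp add: poly_to_rf_def)

lemma poly_to_rf_one[simp]: "poly_to_rf 1 = 1"
  by (simp add: poly_to_rf_def One_fract_def)

definition monT :: "nat set \<Rightarrow> mpoly" where "monT T = (\<Prod>j\<in>T. Var j)"
definition w :: "nat set \<Rightarrow> ratfun" where "w T = poly_to_rf (monT T - 1)"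
definition mono :: "(nat \<Rightarrow> nat) \<Rightarrow> nat set \<Rightarrow> mpoly" where "mono e A = (\<Prod>j\<in>A. Var j ^ e j)"

lemma phi1_superset: "finite A \<Longrightarrow> {S. f S \<noteq> 0} \<subseteq> A \<Longrightarrow> phi1 f = (\<Prod>S\<in>A. w S powi f S)"
  unfolding phi1_def w_def monT_def
  by (rule prod.mono_neutral_left) auto

lemma mon_to_rf_superset: "finite A \<Longrightarrow> {j. e j \<noteq> 0} \<subseteq> A \<Longrightarrow> mon_to_rf e = poly_to_rf (mono e A)"
  unfolding mon_to_rf_def mono_def
  by (rule arg_cong[where f=poly_to_rf], rule prod.mono_neutral_left) auto

lemma monT_single: "monT T = Poly_Mapping.single (\<Sum>j\<in>T. Poly_Mapping.single j 1) 1"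
  by (simp add: monT_def Var_def prod_single1)


lemma monT_ne1: assumes "finite T" "T \<noteq> {}" shows "monT T \<noteq> 1"
proof
  assume a: "monT T = 1"
  obtain j where j: "j \<in> T" using assms by auto
  have "Poly_Mapping.lookup (monT T) (\<Sum>j\<in>T. Poly_Mapping.single j 1) = 1"
    by (simp add: monT_single)
  then have "(\<Sum>j\<in>T. Poly_Mapping.single j (1::nat)) = 0"
    using a by (simp add: lookup_one when_def split: if_splits)
  then have "Poly_Mapping.lookup (\<Sum>j\<in>T. Poly_Mapping.single j (1::nat)) j = 0" by simp
  moreover have "Poly_Mapping.lookup (\<Sum>j\<in>T. Poly_Mapping.single j (1::nat)) j = 1"
    using j assms by (simp add: lookup_sum lookup_single when_def)
  ultimately show False by simp
qed

lemma poly_to_rf_ne0: "p \<noteq> 0 \<Longrightarrow> poly_to_rf p \<noteq> 0"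
  by (simp add: poly_to_rf_def Zero_fract_def eq_fract)

lemma w_ne0: "finite T \<Longrightarrow> T \<noteq> {} \<Longrightarrow> w T \<noteq> 0"
  using monT_ne1 by (simp add: w_def poly_to_rf_ne0)

lemma peval_monT: "peval \<sigma> (monT T) = (\<Prod>j\<in>T. \<sigma> j)"
  by (simp add: monT_def peval_prod)

lemma peval_mono: "peval \<sigma> (mono e A) = (\<Prod>j\<in>A. \<sigma> j ^ e j)"
  by (simp add: mono_def peval_prod peval_power)

lemma rsubst_w: "good \<sigma> \<Longrightarrow> peval \<sigma> (monT T) = monT T' \<Longrightarrow> rsubst \<sigma> (w T) = w T'"
  by (simp add: w_def rsubst_poly peval_diff)

lemma rsubst_phi1:
  assumes "good \<sigma>" "finite {S. f S \<noteq> 0}" "\<And>S. f S \<noteq> 0 \<Longrightarrow> peval \<sigma> (monT S) = monT (\<Phi> S)"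
  shows "rsubst \<sigma> (phi1 f) = (\<Prod>S\<in>{S. f S \<noteq> 0}. w (\<Phi> S) powi f S)"
proof -
  have "rsubst \<sigma> (phi1 f) = (\<Prod>S\<in>{S. f S \<noteq> 0}. rsubst \<sigma> (w S) powi f S)"
    using assms(1) by (simp add: phi1_def rsubst_prod rsubst_powi w_def monT_def)
  also have "\<dots> = (\<Prod>S\<in>{S. f S \<noteq> 0}. w (\<Phi> S) powi f S)"
    by (rule prod.cong[OF refl]) (simp add: rsubst_w[OF assms(1)] assms(3))
  finally show ?thesis .
qed

lemma push_prod:
  assumes inj: "inj_on \<Phi> {S. P S}" and fin: "finite {S. P S}"
    and supp: "\<And>S. F S \<noteq> 0 \<Longrightarrow> P S"
    and A: "finite A" "\<Phi> ` {S. F S \<noteq> 0} \<subseteq> A"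
  shows "(\<Prod>T\<in>A. W T powi (\<Sum>S\<in>{S. P S \<and> \<Phi> S = T}. F S)) = (\<Prod>S\<in>{S. F S \<noteq> 0}. W (\<Phi> S) powi F S)"
proof -
  let ?s = "{S. F S \<noteq> 0}"
  have fs: "finite ?s" using fin supp by (metis (mono_tags) finite_subset mem_Collect_eq subsetI)
  have z: "(\<Sum>S\<in>{S. P S \<and> \<Phi> S = T}. F S) = 0" if "T \<notin> \<Phi> ` ?s" for T
    by (rule sum.neutral) (use that in auto)
  have "(\<Prod>T\<in>A. W T powi (\<Sum>S\<in>{S. P S \<and> \<Phi> S = T}. F S)) = (\<Prod>T\<in>\<Phi> ` ?s. W T powi (\<Sum>S\<in>{S. P S \<and> \<Phi> S = T}. F S))"
    by (rule prod.mono_neutral_right) (use A z in auto)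
  also have "\<dots> = (\<Prod>S\<in>?s. W (\<Phi> S) powi (\<Sum>S'\<in>{S'. P S' \<and> \<Phi> S' = \<Phi> S}. F S'))"
  proof -
    have "inj_on \<Phi> ?s" by (rule inj_on_subset[OF inj]) (use supp in auto)
    then show ?thesis by (simp add: prod.reindex)
  qed
  also have "\<dots> = (\<Prod>S\<in>?s. W (\<Phi> S) powi F S)"
  proof (rule prod.cong[OF refl])
    fix S assume "S \<in> ?s"
    then have "P S" using supp by auto
    then have "{S'. P S' \<and> \<Phi> S' = \<Phi> S} = {S}" using inj by (auto dest: inj_onD)
    then show "W (\<Phi> S) powi (\<Sum>S'\<in>{S'. P S' \<and> \<Phi> S' = \<Phi> S}. F S') = W (\<Phi> S) powi F S" by simp
  qed
  finally show ?thesis .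
qed

lemma ff_block_disj: "1 \<le> n \<Longrightarrow> j \<noteq> j' \<Longrightarrow> ff_block i n j \<inter> ff_block i n j' = {}"
  unfolding ff_block_def by auto

lemma ff_block_ne: "1 \<le> n \<Longrightarrow> ff_block i n j \<noteq> {}"
  unfolding ff_block_def by auto

lemma ff_block_fin: "finite (ff_block i n j)"
  unfolding ff_block_def by auto

lemma union_blocks_inj:
  assumes disj: "\<And>j j'. j \<noteq> j' \<Longrightarrow> blk j \<inter> blk j' = {}" and ne: "\<And>j. blk j \<noteq> {}"
  shows "inj (\<lambda>S. \<Union>k\<in>S. blk k)"
proof (rule injI)
  fix S S' assume eq: "(\<Union>k\<in>S. blk k) = (\<Union>k\<in>S'. blk k)"
  have *: "k \<in> S \<longleftrightarrow> k \<in> S'" for k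
  proof -
    have mem: "k \<in> X \<longleftrightarrow> (\<exists>x\<in>blk k. x \<in> (\<Union>k\<in>X. blk k))" for X
    proof
      assume "k \<in> X" then show "\<exists>x\<in>blk k. x \<in> (\<Union>k\<in>X. blk k)" using ne[of k] by blast
    next
      assume "\<exists>x\<in>blk k. x \<in> (\<Union>k\<in>X. blk k)"
      then obtain x k' where "x \<in> blk k" "k' \<in> X" "x \<in> blk k'" by blast
      then show "k \<in> X" using disj[of k k'] by (cases "k = k'") auto
    qed
    show ?thesis using mem[of S] mem[of S'] eq by simp
  qed
  then show "S = S'" by blast
qed

lemma FF_fin: "f \<in> FF k \<Longrightarrow> finite {S. f S \<noteq> 0}"
  by (rule finite_subset[of _ "Pow {1..k}"]) (auto simp: FF_def)

lemma FF_supp: "f \<in> FF k \<Longrightarrow> f S \<noteq> 0 \<Longrightarrow> S \<noteq> {} \<and> S \<subseteq> {1..k}"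
  by (auto simp: FF_def)

lemma Mon_supp: "e \<in> Mon k \<Longrightarrow> {j. e j \<noteq> 0} \<subseteq> {1..k}"
  by (auto simp: Mon_def)

lemma phiM_split: "x \<in> MFF k \<Longrightarrow> phiM x = poly_to_rf (mono (fst x) {1..k}) * phi1 (snd x)"
  by (auto simp: phiM_def MFF_def mon_to_rf_superset[OF finite_atLeastAtMost Mon_supp])

context
  fixes m n i :: nat
  assumes n: "1 \<le> n" and i: "1 \<le> i" and im: "i \<le> m"
begin

abbreviation "\<sigma>F \<equiv> (\<lambda>j. if j < i then Var j else if j = i then PiV i n else Var (j + n - 1))"
abbreviation "\<sigma>G \<equiv> (\<lambda>k. Var (k + i - 1))"
abbreviation "BB \<equiv> (\<lambda>S. \<Union>k\<in>S. ff_block i n k)"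
abbreviation "sh \<equiv> (\<lambda>k::nat. k + i - 1)"

lemma good_F: "good \<sigma>F"
proof (rule good_by_inverse[where \<tau>="\<lambda>j. if j \<le> i then Var j else if j < i + n then 1 else Var (j + 1 - n)"])
  show "(\<lambda>j. peval (\<lambda>j. if j \<le> i then Var j else if j < i + n then 1 else Var (j + 1 - n)) (\<sigma>F j)) = Var"
  proof
    fix j
    show "peval (\<lambda>j. if j \<le> i then Var j else if j < i + n then 1 else Var (j + 1 - n)) (\<sigma>F j) = Var j"
    proof (cases "j < i")
      case True then show ?thesis by simp
    next
      case False
      show ?thesis
      proof (cases "j = i")
        case True
        have s: "{i..i+n-1} = insert i {i+1..i+n-1}" using n by auto
        let ?t = "\<lambda>j. if j \<le> i then Var j else if j < i + n then 1 else Var (j + 1 - n)"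
        have "(\<Prod>x\<in>{i..i+n-1}. ?t x) = ?t i * (\<Prod>x\<in>{i+1..i+n-1}. ?t x)"
          by (simp only: s, rule prod.insert) auto
        also have "(\<Prod>x\<in>{i+1..i+n-1}. ?t x) = 1" by (rule prod.neutral) auto
        finally show ?thesis using True by (simp add: PiV_def peval_prod)
      next
        case False
        then have "\<not> (j + n - 1 < i + n)" "\<not> j + n - 1 \<le> i" "j + n - 1 + 1 - n = j" using \<open>\<not> j < i\<close> n by arith+
        then show ?thesis using \<open>\<not> j < i\<close> False by simp
      qed
    qed
  qed
qed

lemma good_G: "good \<sigma>G"
  by (rule good_by_inverse[where \<tau>="\<lambda>j. Var (j + 1 - i)"]) (use i in auto)

lemma inj_sh: "inj sh"
  using i by (auto intro!: injI)

lemma sigmaF_blk: "\<sigma>F j = monT (ff_block i n j)"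
  by (auto simp: ff_block_def monT_def PiV_def)

lemma peval_F_monT: "finite S \<Longrightarrow> peval \<sigma>F (monT S) = monT (BB S)"
proof -
  assume fS: "finite S"
  have "peval \<sigma>F (monT S) = (\<Prod>j\<in>S. monT (ff_block i n j))"
    by (simp only: peval_monT sigmaF_blk)
  also have "\<dots> = (\<Prod>j\<in>S. \<Prod>k\<in>ff_block i n j. Var k)" by (simp add: monT_def)
  also have "\<dots> = monT (BB S)"
    unfolding monT_def
    by (rule prod.UNION_disjoint[symmetric]) (use fS ff_block_fin ff_block_disj[OF n] in auto)
  finally show ?thesis .
qed

lemma peval_G_monT: "peval \<sigma>G (monT S) = monT (sh ` S)"
proof -
  have "monT (sh ` S) = (\<Prod>j\<in>S. Var (sh j))"
    unfolding monT_def using prod.reindex[OF inj_on_subset[OF inj_sh subset_UNIV], of Var S] by (simp add: comp_def)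
  then show ?thesis by (simp only: peval_monT)
qed

lemma blk_union: "(\<Union>j\<in>{1..m}. ff_block i n j) = {1..m+n-1}"
proof
  show "(\<Union>j\<in>{1..m}. ff_block i n j) \<subseteq> {1..m+n-1}"
    using n i im by (auto simp: ff_block_def split: if_splits)
  show "{1..m+n-1} \<subseteq> (\<Union>j\<in>{1..m}. ff_block i n j)"
  proof
    fix k assume k: "k \<in> {1..m+n-1}"
    show "k \<in> (\<Union>j\<in>{1..m}. ff_block i n j)"
    proof (cases "k < i")
      case True then show ?thesis using k im by (auto simp: ff_block_def intro!: bexI[of _ k])
    next
      case False
      show ?thesis
      proof (cases "k < i + n")
        case True then show ?thesis using k im False i by (auto simp: ff_block_def intro!: bexI[of _ i])
      next
        case False
        then show ?thesis using k im \<open>\<not> k < i\<close> n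
          by (auto simp: ff_block_def intro!: bexI[of _ "k + 1 - n"])
      qed
    qed
  qed
qed

definition c1 :: "(nat \<Rightarrow> nat) \<Rightarrow> nat \<Rightarrow> nat" where
  "c1 e k = (if k < i then e k else if k < i + n then e i else e (k + 1 - n))"
definition g' :: "(nat \<Rightarrow> nat) \<Rightarrow> nat \<Rightarrow> nat" where
  "g' g k = (if i \<le> k \<and> k < i + n then g (k + 1 - i) else 0)"

lemma mon_comp_split: "mon_comp i n e g k = c1 e k + g' g k"
  unfolding mon_comp_def c1_def g'_def by auto

lemma peval_F_mono: "peval \<sigma>F (mono e {1..m}) = mono (c1 e) {1..m+n-1}"
proof -
  have "peval \<sigma>F (mono e {1..m}) = (\<Prod>j\<in>{1..m}. (\<Prod>k\<in>ff_block i n j. Var k) ^ e j)"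
    by (simp only: peval_mono sigmaF_blk monT_def)
  also have "\<dots> = (\<Prod>j\<in>{1..m}. \<Prod>k\<in>ff_block i n j. Var k ^ c1 e k)"
  proof (rule prod.cong[OF refl])
    fix j assume j: "j \<in> {1..m}"
    have "(\<Prod>k\<in>ff_block i n j. Var k) ^ e j = (\<Prod>k\<in>ff_block i n j. Var k ^ e j)"
      by (simp add: prod_power_distrib)
    also have "\<dots> = (\<Prod>k\<in>ff_block i n j. Var k ^ c1 e k)"
      by (rule prod.cong[OF refl]) (use n in \<open>auto simp: ff_block_def c1_def split: if_splits\<close>)
    finally show "(\<Prod>k\<in>ff_block i n j. Var k) ^ e j = (\<Prod>k\<in>ff_block i n j. Var k ^ c1 e k)" .
  qed
  also have "\<dots> = (\<Prod>k\<in>(\<Union>j\<in>{1..m}. ff_block i n j). Var k ^ c1 e k)"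
    by (rule prod.UNION_disjoint[symmetric]) (use ff_block_fin ff_block_disj[OF n] in auto)
  also have "\<dots> = mono (c1 e) {1..m+n-1}"
    by (simp only: blk_union mono_def)
  finally show ?thesis .
qed

lemma peval_G_mono: "peval \<sigma>G (mono g {1..n}) = mono (g' g) {1..m+n-1}"
proof -
  have "mono (g' g) {1..m+n-1} = (\<Prod>k\<in>{i..i+n-1}. Var k ^ g' g k)"
    unfolding mono_def
    by (rule prod.mono_neutral_right) (use n i im in \<open>auto simp: g'_def\<close>)
  also have "{i..i+n-1} = sh ` {1..n}"
  proof
    show "{i..i + n - 1} \<subseteq> sh ` {1..n}"
    proof
      fix k assume "k \<in> {i..i+n-1}"
      then show "k \<in> sh ` {1..n}" using i n by (intro image_eqI[of _ _ "k + 1 - i"]) auto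
    qed
  qed (use i in auto)
  also have "(\<Prod>k\<in>sh ` {1..n}. Var k ^ g' g k) = (\<Prod>j\<in>{1..n}. Var (j + i - 1) ^ g j)"
    using i by (subst prod.reindex[OF inj_on_subset[OF inj_sh subset_UNIV]]) (auto simp: g'_def intro!: prod.cong)
  finally show ?thesis by (simp add: peval_mono)
qed

lemma mono_comp:
  "peval \<sigma>F (mono e {1..m}) * peval \<sigma>G (mono g {1..n}) = mono (mon_comp i n e g) {1..m+n-1}"
  by (simp only: peval_F_mono peval_G_mono) (simp add: mono_def mon_comp_split power_add prod.distrib)


lemma inj_BB: "inj BB"
  by (rule union_blocks_inj) (use ff_block_disj[OF n] ff_block_ne[OF n] in auto)

lemma inj_img_sh: "inj (image sh)"
proof (rule injI)
  fix A B :: "nat set" assume "sh ` A = sh ` B"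
  then show "A = B" using inj_image_eq_iff[OF inj_sh] by metis
qed

lemma phi1_comp:
  assumes F: "F \<in> FF m" and G: "G \<in> FF n"
  shows "phi1 (ff_comp m i n F G) = w {i..i+n-1} * (\<Prod>S\<in>{S. F S \<noteq> 0}. w (BB S) powi F S)
            * (\<Prod>S\<in>{S. G S \<noteq> 0}. w (sh ` S) powi G S)"
proof -
  let ?sF = "{S. F S \<noteq> 0}" and ?sG = "{S. G S \<noteq> 0}"
  define A where "A = insert {i..i+n-1} (BB ` ?sF \<union> image sh ` ?sG)"
  define a where "a T = (if T = {i..i+n-1} then 1 else (0::int))" for T
  define b where "b T = (\<Sum>S\<in>{S. S \<subseteq> {1..m} \<and> BB S = T}. F S)" for T
  define c where "c T = (\<Sum>S\<in>{S. S \<subseteq> {1..n} \<and> sh ` S = T}. G S)" for T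
  have ff: "ff_comp m i n F G = (\<lambda>T. a T + b T + c T)"
    unfolding ff_comp_def a_def b_def c_def by simp
  have finA: "finite A" unfolding A_def using FF_fin[OF F] FF_fin[OF G] by auto
  have supp: "{T. ff_comp m i n F G T \<noteq> 0} \<subseteq> A"
  proof
    fix T assume T: "T \<in> {T. ff_comp m i n F G T \<noteq> 0}"
    show "T \<in> A"
    proof (rule ccontr)
      assume "T \<notin> A"
      then have "a T = 0" "b T = 0" "c T = 0"
        unfolding a_def b_def c_def A_def by (auto intro!: sum.neutral)
      then show False using T ff by simp
    qed
  qed
  have wne: "w T \<noteq> 0" if "T \<in> A" for T
  proof -
    have fF: "finite S \<and> S \<noteq> {}" if "F S \<noteq> 0" for S
      using FF_supp[OF F that] finite_subset[of S "{1..m}"] by auto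
    have fG: "finite S \<and> S \<noteq> {}" if "G S \<noteq> 0" for S
      using FF_supp[OF G that] finite_subset[of S "{1..n}"] by auto
    have "finite T \<and> T \<noteq> {}"
      using that unfolding A_def
    proof (elim insertE UnE imageE)
      fix S assume "T = BB S" "S \<in> ?sF"
      then show ?thesis using fF[of S] ff_block_ne[OF n] ff_block_fin by auto
    next
      fix S assume "T = sh ` S" "S \<in> ?sG"
      then show ?thesis using fG[of S] by auto
    qed (use n in auto)
    then show ?thesis using w_ne0 by auto
  qed
  have "phi1 (ff_comp m i n F G) = (\<Prod>T\<in>A. w T powi (a T + b T + c T))"
    using phi1_superset[OF finA supp] ff by simp
  also have "\<dots> = (\<Prod>T\<in>A. w T powi a T) * (\<Prod>T\<in>A. w T powi b T) * (\<Prod>T\<in>A. w T powi c T)"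
    by (simp add: power_int_add wne prod.distrib[symmetric])
  also have "(\<Prod>T\<in>A. w T powi a T) = w {i..i+n-1}"
  proof -
    have "(\<Prod>T\<in>A. w T powi a T) = (\<Prod>T\<in>A. if T = {i..i+n-1} then w T else 1)"
      by (rule prod.cong) (auto simp: a_def)
    also have "\<dots> = w {i..i+n-1}" using finA by (simp add: prod.delta' A_def)
    finally show ?thesis .
  qed
  also have "(\<Prod>T\<in>A. w T powi b T) = (\<Prod>S\<in>?sF. w (BB S) powi F S)"
    unfolding b_def
    by (rule push_prod[where P="\<lambda>S. S \<subseteq> {1..m}" and \<Phi>=BB])
       (use inj_on_subset[OF inj_BB subset_UNIV] FF_supp[OF F] finA in \<open>auto simp: A_def\<close>)
  also have "(\<Prod>T\<in>A. w T powi c T) = (\<Prod>S\<in>?sG. w (sh ` S) powi G S)"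
    unfolding c_def
    by (rule push_prod[where P="\<lambda>S. S \<subseteq> {1..n}" and \<Phi>="image sh"])
       (use inj_on_subset[OF inj_img_sh subset_UNIV] FF_supp[OF G] finA in \<open>auto simp: A_def\<close>)
  finally show ?thesis .
qed

lemma comp_main:
  assumes x: "x \<in> MFF m" and y: "y \<in> MFF n"
  shows "phiM (mff_comp m i n x y) = mould_comp i n (phiM x) (phiM y)"
proof -
  obtain e F where xe: "x = (e, F)" "e \<in> Mon m" "F \<in> FF m" using x by (auto simp: MFF_def)
  obtain g G where yg: "y = (g, G)" "g \<in> Mon n" "G \<in> FF n" using y by (auto simp: MFF_def)
  have suppc: "{k. mon_comp i n e g k \<noteq> 0} \<subseteq> {1..m+n-1}"
  proof
    fix k assume "k \<in> {k. mon_comp i n e g k \<noteq> 0}"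
    moreover have he: "1 \<le> j \<and> j \<le> m" if "e j \<noteq> 0" for j using Mon_supp[OF xe(2)] that by auto
    moreover have hg: "1 \<le> j \<and> j \<le> n" if "g j \<noteq> 0" for j using Mon_supp[OF yg(2)] that by auto
    ultimately show "k \<in> {1..m+n-1}"
    proof (cases "k < i")
      case True then have "e k \<noteq> 0" using \<open>k \<in> _\<close> by (simp add: mon_comp_def)
      then show ?thesis using he[of k] im n by auto
    next
      case F1: False
      show ?thesis
      proof (cases "k < i + n")
        case True then show ?thesis using F1 i im by auto
      next
        case False then have "e (k + 1 - n) \<noteq> 0" using \<open>k \<in> _\<close> F1 by (simp add: mon_comp_def)
        then show ?thesis using he[of "k + 1 - n"] n i False by auto
      qed
    qed
  qed
  have M: "mon_to_rf (mon_comp i n e g) = poly_to_rf (peval \<sigma>F (mono e {1..m})) * poly_to_rf (peval \<sigma>G (mono g {1..n}))"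
    by (simp only: mon_to_rf_superset[OF finite_atLeastAtMost suppc] mono_comp[symmetric] poly_to_rf_mult)
  have L: "phiM (mff_comp m i n x y) = poly_to_rf (peval \<sigma>F (mono e {1..m})) * poly_to_rf (peval \<sigma>G (mono g {1..n}))
      * (w {i..i+n-1} * (\<Prod>S\<in>{S. F S \<noteq> 0}. w (BB S) powi F S) * (\<Prod>S\<in>{S. G S \<noteq> 0}. w (sh ` S) powi G S))"
    using xe yg
    by (simp add: phiM_def mff_comp_def phi1_comp M)
  have RF: "rsubst \<sigma>F (phiM x) = poly_to_rf (peval \<sigma>F (mono e {1..m})) * (\<Prod>S\<in>{S. F S \<noteq> 0}. w (BB S) powi F S)"
    using phiM_split[OF x] xe good_F
    by (simp add: rsubst_mult rsubst_poly rsubst_phi1[where \<Phi>=BB] FF_fin peval_F_monT FF_supp[THEN conjunct2, THEN finite_subset])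
  have RG: "rsubst \<sigma>G (phiM y) = poly_to_rf (peval \<sigma>G (mono g {1..n})) * (\<Prod>S\<in>{S. G S \<noteq> 0}. w (sh ` S) powi G S)"
  proof -
    have PG: "rsubst \<sigma>G (phi1 G) = (\<Prod>S\<in>{S. G S \<noteq> 0}. w (sh ` S) powi G S)"
      by (rule rsubst_phi1[OF good_G FF_fin[OF yg(3)]]) (rule peval_G_monT)
    have e: "phiM y = poly_to_rf (mono g {1..n}) * phi1 G" using phiM_split[OF y] yg(1) by simp
    show ?thesis unfolding e
      by (simp only: rsubst_mult[OF good_G] rsubst_poly[OF good_G] PG)
  qed
  have P: "poly_to_rf (PiV i n - 1) = w {i..i+n-1}"
    by (simp add: PiV_def w_def monT_def)
  show ?thesis
    unfolding L mould_comp_def RF RG P by (simp add: mult_ac)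
qed

end

lemma unit_ok: "phiM mff_unit = mould_unit"
proof -
  have s: "{S. ff_unit S \<noteq> 0} = {{1}}" by (auto simp: ff_unit_def)
  have "mon_to_rf mon_unit = 1" by (simp add: mon_to_rf_def mon_unit_def)
  moreover have "phi1 ff_unit = inverse (poly_to_rf (Var 1 - 1))"
    by (simp add: phi1_def s ff_unit_def power_int_minus)
  ultimately show ?thesis by (simp add: phiM_def mff_unit_def mould_unit_def)
qed

context
  fixes n :: nat and \<pi> :: "nat \<Rightarrow> nat"
  assumes perm: "\<pi> permutes {1..n}"
begin

lemma good_P: "good (\<lambda>j. Var (\<pi> j))"
  by (rule good_by_inverse[where \<tau>="\<lambda>j. Var (inv \<pi> j)"]) (auto simp: permutes_inverses[OF perm])

lemma inj_pi: "inj \<pi>" using permutes_inj[OF perm] .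

lemma inj_img_pi: "inj (image \<pi>)"
proof (rule injI)
  fix A B :: "nat set" assume "\<pi> ` A = \<pi> ` B"
  then show "A = B" using inj_image_eq_iff[OF inj_pi] by metis
qed

lemma img_inv: "\<pi> ` (inv \<pi> ` T) = T"
  by (auto simp: image_comp permutes_inverses[OF perm] comp_def)

lemma inv_img: "inv \<pi> ` (\<pi> ` T) = T"
  by (auto simp: image_comp permutes_inverses[OF perm] comp_def)

lemma peval_P_monT: "peval (\<lambda>j. Var (\<pi> j)) (monT S) = monT (\<pi> ` S)"
proof -
  have "monT (\<pi> ` S) = (\<Prod>j\<in>S. Var (\<pi> j))"
    unfolding monT_def using prod.reindex[OF inj_on_subset[OF inj_pi subset_UNIV], of Var S] by (simp add: comp_def)
  then show ?thesis by (simp only: peval_monT)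
qed

lemma act_main:
  assumes x: "x \<in> MFF n"
  shows "phiM (mff_act \<pi> x) = mould_act \<pi> (phiM x)"
proof -
  obtain e f where xe: "x = (e, f)" "e \<in> Mon n" "f \<in> FF n" using x by (auto simp: MFF_def)
  have suppe: "{k. e (inv \<pi> k) \<noteq> 0} \<subseteq> {1..n}"
  proof
    fix k assume "k \<in> {k. e (inv \<pi> k) \<noteq> 0}"
    then have "inv \<pi> k \<in> {1..n}" using Mon_supp[OF xe(2)] by auto
    then have "\<pi> (inv \<pi> k) \<in> \<pi> ` {1..n}" by blast
    then show "k \<in> {1..n}" unfolding permutes_image[OF perm] permutes_inverses(1)[OF perm] .
  qed
  have M: "mon_to_rf (mon_act \<pi> e) = poly_to_rf (peval (\<lambda>j. Var (\<pi> j)) (mono e {1..n}))"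
  proof -
    have "mon_to_rf (mon_act \<pi> e) = poly_to_rf (mono (\<lambda>k. e (inv \<pi> k)) {1..n})"
      unfolding mon_act_def by (rule mon_to_rf_superset[OF finite_atLeastAtMost suppe])
    also have "mono (\<lambda>k. e (inv \<pi> k)) {1..n} = (\<Prod>k\<in>\<pi> ` {1..n}. Var k ^ e (inv \<pi> k))"
      by (simp only: mono_def permutes_image[OF perm])
    also have "\<dots> = (\<Prod>j\<in>{1..n}. Var (\<pi> j) ^ e j)"
      by (subst prod.reindex[OF inj_on_subset[OF inj_pi subset_UNIV]]) (simp add: permutes_inverses[OF perm])
    finally show ?thesis by (simp add: peval_mono)
  qed
  have suppf: "{T. f (inv \<pi> ` T) \<noteq> 0} \<subseteq> image \<pi> ` {S. f S \<noteq> 0}"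
  proof
    fix T assume "T \<in> {T. f (inv \<pi> ` T) \<noteq> 0}"
    then show "T \<in> image \<pi> ` {S. f S \<noteq> 0}" using img_inv[of T] by (intro image_eqI[of _ _ "inv \<pi> ` T"]) auto
  qed
  have Pf: "phi1 (ff_act \<pi> f) = (\<Prod>S\<in>{S. f S \<noteq> 0}. w (\<pi> ` S) powi f S)"
  proof -
    have "phi1 (ff_act \<pi> f) = (\<Prod>T\<in>image \<pi> ` {S. f S \<noteq> 0}. w T powi f (inv \<pi> ` T))"
      unfolding ff_act_def using FF_fin[OF xe(3)] suppf by (intro phi1_superset) auto
    also have "\<dots> = (\<Prod>S\<in>{S. f S \<noteq> 0}. w (\<pi> ` S) powi f S)"
      by (subst prod.reindex[OF inj_on_subset[OF inj_img_pi subset_UNIV]]) (simp add: inv_img)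
    finally show ?thesis .
  qed
  have R: "rsubst (\<lambda>j. Var (\<pi> j)) (phi1 f) = (\<Prod>S\<in>{S. f S \<noteq> 0}. w (\<pi> ` S) powi f S)"
    by (rule rsubst_phi1[OF good_P FF_fin[OF xe(3)]]) (rule peval_P_monT)
  have e: "phiM x = poly_to_rf (mono e {1..n}) * phi1 f" using phiM_split[OF x] xe(1) by simp
  show ?thesis
    unfolding mould_act_def e
    by (simp only: rsubst_mult[OF good_P] rsubst_poly[OF good_P] R xe(1) mff_act_def fst_conv snd_conv phiM_def M Pf)
qed

end

lemma vars_mult: "mpoly_vars (p * q) \<subseteq> mpoly_vars p \<union> mpoly_vars q"
proof
  fix v assume "v \<in> mpoly_vars (p * q)"
  then obtain e where e: "e \<in> Poly_Mapping.keys (p * q)" "v \<in> Poly_Mapping.keys e"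
    unfolding mpoly_vars_def by auto
  have "e \<in> {a + b | a b. a \<in> Poly_Mapping.keys p \<and> b \<in> Poly_Mapping.keys q}"
    using keys_mult[of p q] e(1) by (rule subsetD)
  then obtain a b where ab: "e = a + b" "a \<in> Poly_Mapping.keys p" "b \<in> Poly_Mapping.keys q"
    by (auto simp only: mem_Collect_eq)
  have "v \<in> Poly_Mapping.keys a \<union> Poly_Mapping.keys b"
    using keys_add[of a b] e(2) ab(1) by (auto simp only:)
  then show "v \<in> mpoly_vars p \<union> mpoly_vars q"
    using ab unfolding mpoly_vars_def by blast
qed

lemma vars_diff: "mpoly_vars (p - q) \<subseteq> mpoly_vars p \<union> mpoly_vars q"
proof -
  have "Poly_Mapping.keys (p - q) \<subseteq> Poly_Mapping.keys p \<union> Poly_Mapping.keys q"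
    by (auto simp: in_keys_iff lookup_minus)
  then show ?thesis unfolding mpoly_vars_def by blast
qed

lemma vars_one[simp]: "mpoly_vars 1 = {}"
  by (simp add: mpoly_vars_def)

lemma vars_zero[simp]: "mpoly_vars 0 = {}"
  by (simp add: mpoly_vars_def)

lemma vars_Var[simp]: "mpoly_vars (Var j) = {j}"
  by (simp add: mpoly_vars_def Var_def)

lemma vars_prod: "mpoly_vars (prod f A) \<subseteq> (\<Union>x\<in>A. mpoly_vars (f x))"
  by (induction A rule: infinite_finite_induct) (use vars_mult in fastforce)+

lemma vars_power: "mpoly_vars (p ^ k) \<subseteq> mpoly_vars p"
  by (induction k) (use vars_mult in fastforce)+

lemma Mould1_poly: "mpoly_vars p \<subseteq> {1..n} \<Longrightarrow> poly_to_rf p \<in> Mould1 n"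
  unfolding Mould1_def poly_to_rf_def by (intro CollectI exI[of _ p] exI[of _ 1]) simp

lemma Mould1_mult: "x \<in> Mould1 n \<Longrightarrow> y \<in> Mould1 n \<Longrightarrow> x * y \<in> Mould1 n"
  unfolding Mould1_def
proof (elim CollectE exE conjE, intro CollectI)
  fix p q p' q' assume "q \<noteq> 0" "mpoly_vars p \<subseteq> {1..n}" "mpoly_vars q \<subseteq> {1..n}" "x = Fract p q"
     "q' \<noteq> 0" "mpoly_vars p' \<subseteq> {1..n}" "mpoly_vars q' \<subseteq> {1..n}" "y = Fract p' q'"
  then show "\<exists>p q. q \<noteq> 0 \<and> mpoly_vars p \<subseteq> {1..n} \<and> mpoly_vars q \<subseteq> {1..n} \<and> x * y = Fract p q"
    using vars_mult[of p p'] vars_mult[of q q'] by (intro exI[of _ "p*p'"] exI[of _ "q*q'"]) auto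
qed

lemma Mould1_inverse: "x \<in> Mould1 n \<Longrightarrow> inverse x \<in> Mould1 n"
  unfolding Mould1_def
proof (elim CollectE exE conjE, intro CollectI)
  fix p q assume a: "q \<noteq> 0" "mpoly_vars p \<subseteq> {1..n}" "mpoly_vars q \<subseteq> {1..n}" "x = Fract p q"
  show "\<exists>p q. q \<noteq> 0 \<and> mpoly_vars p \<subseteq> {1..n} \<and> mpoly_vars q \<subseteq> {1..n} \<and> inverse x = Fract p q"
  proof (cases "p = 0")
    case True then show ?thesis using a by (intro exI[of _ 0] exI[of _ 1]) (simp add: eq_fract(2))
  next
    case False then show ?thesis using a by (intro exI[of _ q] exI[of _ p]) simp
  qed
qed

lemma Mould1_one: "1 \<in> Mould1 n"
  using Mould1_poly[of 1 n] by simp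

lemma Mould1_power: "x \<in> Mould1 n \<Longrightarrow> x ^ k \<in> Mould1 n"
  by (induction k) (auto intro: Mould1_mult Mould1_one)

lemma Mould1_powi: "x \<in> Mould1 n \<Longrightarrow> x powi k \<in> Mould1 n"
  by (simp add: power_int_def Mould1_power Mould1_inverse)

lemma Mould1_prod: "(\<And>a. a \<in> A \<Longrightarrow> f a \<in> Mould1 n) \<Longrightarrow> prod f A \<in> Mould1 n"
  by (induction A rule: infinite_finite_induct) (auto intro: Mould1_mult Mould1_one)

lemma phiM_Mould1: "x \<in> MFF n \<Longrightarrow> phiM x \<in> Mould1 n"
proof -
  assume x: "x \<in> MFF n"
  obtain e f where xe: "x = (e, f)" "e \<in> Mon n" "f \<in> FF n" using x by (auto simp: MFF_def)
  have vj: "mpoly_vars (Var j ^ e j) \<subseteq> {j}" for j using vars_power[of "Var j" "e j"] by simp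
  have "mpoly_vars (mono e {1..n}) \<subseteq> {1..n}"
    unfolding mono_def using vars_prod[of "\<lambda>j. Var j ^ e j" "{1..n}"] vj by blast
  moreover have "w S \<in> Mould1 n" if "f S \<noteq> 0" for S
  proof -
    have "S \<subseteq> {1..n}" using FF_supp[OF xe(3) that] by auto
    moreover have "mpoly_vars (monT S) \<subseteq> (\<Union>j\<in>S. {j})" unfolding monT_def using vars_prod[of Var S] by simp
    ultimately have "mpoly_vars (monT S - 1) \<subseteq> {1..n}"
      using vars_diff[of "monT S" 1] by auto
    then show ?thesis unfolding w_def by (rule Mould1_poly)
  qed
  moreover have eq: "phiM x = poly_to_rf (mono e {1..n}) * (\<Prod>S\<in>{S. f S \<noteq> 0}. w S powi f S)"
    using phiM_split[OF x] xe(1) phi1_superset[OF FF_fin[OF xe(3)] subset_refl] by simp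
  ultimately show ?thesis
    by (simp only: eq) (intro Mould1_mult Mould1_poly Mould1_prod Mould1_powi; auto)
qed

definition cc :: "nat \<Rightarrow> rat" where "cc j = 2 ^ (2 ^ j)"
definition CC :: "nat set \<Rightarrow> rat" where "CC U = (\<Prod>j\<in>U. cc j)"

lemma CC_enc: "CC U = 2 ^ set_encode U"
  by (simp add: CC_def cc_def set_encode_def power_sum)

lemma CC_pos: "CC U > 0"
  by (simp add: CC_enc)

lemma CC_inj: "finite U \<Longrightarrow> finite V \<Longrightarrow> CC U = CC V \<Longrightarrow> U = V"
  by (simp add: CC_enc power_inject_exp set_encode_eq)

lemma CC_ne1: assumes "finite U" "U \<noteq> {}" shows "CC U \<noteq> 1"
proof
  assume "CC U = 1" then have "CC U = CC {}" by (simp add: CC_def)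
  then show False using CC_inj[of U "{}"] assms by simp
qed

lemma cc_ne0: "cc j \<noteq> 0" by (simp add: cc_def)

definition psi :: "nat \<Rightarrow> nat \<Rightarrow> rat poly" where
  "psi j0 j = (if j = j0 then [:0, 1:] else [:cc j:])"

abbreviation ev :: "nat \<Rightarrow> mpoly \<Rightarrow> rat poly" where
  "ev j0 \<equiv> geval (\<lambda>c. [:c:]) (psi j0)"

lemma const_prod: "(\<Prod>j\<in>U. [:f j:]) = [:\<Prod>j\<in>U. f j:]"
  by (induction U rule: infinite_finite_induct) (auto simp: mult.commute)

lemma ev_monT:
  assumes "finite T"
  shows "ev j0 (monT T) = (if j0 \<in> T then [:0, CC (T - {j0}):] else [:CC T:])"
proof -
  have "ev j0 (monT T) = (\<Prod>j\<in>T. psi j0 j)"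
    unfolding monT_def by (simp add: geval_prod[OF rhom_pCons] geval_Var[OF rhom_pCons])
  also have "\<dots> = (if j0 \<in> T then [:0, CC (T - {j0}):] else [:CC T:])"
  proof (cases "j0 \<in> T")
    case True
    have "(\<Prod>j\<in>T. psi j0 j) = psi j0 j0 * (\<Prod>j\<in>T - {j0}. psi j0 j)"
      using True assms by (simp add: prod.remove)
    also have "(\<Prod>j\<in>T - {j0}. psi j0 j) = (\<Prod>j\<in>T - {j0}. [:cc j:])"
      by (rule prod.cong) (auto simp: psi_def)
    finally show ?thesis using True by (simp add: const_prod psi_def CC_def)
  next
    case False
    have "(\<Prod>j\<in>T. psi j0 j) = (\<Prod>j\<in>T. [:cc j:])"
      by (rule prod.cong) (use False in \<open>auto simp: psi_def\<close>)
    then show ?thesis using False by (simp add: const_prod CC_def)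
  qed
  finally show ?thesis .
qed

lemma ev_fac:
  assumes "finite T"
  shows "ev j0 (monT T - 1) = (if j0 \<in> T then smult (CC (T - {j0})) [:- inverse (CC (T - {j0})), 1:] else [:CC T - 1:])"
proof -
  have "ev j0 (monT T - 1) = ev j0 (monT T) - 1"
    by (simp add: geval_diff[OF rhom_pCons] geval_one[OF rhom_pCons])
  moreover have "CC (T - {j0}) \<noteq> 0" using CC_pos[of "T - {j0}"] by simp
  ultimately show ?thesis using assms by (simp add: ev_monT one_pCons)
qed

lemma order_pow: "p \<noteq> 0 \<Longrightarrow> order r (p ^ k) = k * order r p"
  for p :: "rat poly"
  by (induction k) (simp_all add: order_mult)

lemma order_prod_pow:
  fixes p :: "'b \<Rightarrow> rat poly"
  assumes "finite A" "\<And>T. T \<in> A \<Longrightarrow> p T \<noteq> 0"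
  shows "order r (\<Prod>T\<in>A. p T ^ k T) = (\<Sum>T\<in>A. k T * order r (p T))"
  using assms
proof (induction A rule: finite_induct)
  case (insert x F)
  have "(\<Prod>T\<in>F. p T ^ k T) \<noteq> 0" using insert by (simp add: prod_zero_iff)
  moreover have "p x ^ k x \<noteq> 0" using insert by simp
  ultimately show ?case using insert by (simp add: order_mult order_pow)
qed simp

context
  fixes S :: "nat set" and j0 :: nat
  assumes fS: "finite S" and j0S: "j0 \<in> S"
begin

definition "rr = inverse (CC (S - {j0}))"

lemma rr_ne0: "rr \<noteq> 0" using CC_pos[of "S - {j0}"] by (simp add: rr_def)

lemma ev_fac_ne0: "finite T \<Longrightarrow> T \<noteq> {} \<Longrightarrow> ev j0 (monT T - 1) \<noteq> 0"
  using CC_pos[of "T - {j0}"] CC_ne1[of T] by (auto simp: ev_fac)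

lemma order_fac:
  assumes "finite T" "T \<noteq> {}"
  shows "order rr (ev j0 (monT T - 1)) = (if T = S then 1 else 0)"
proof (cases "j0 \<in> T")
  case True
  have C0: "CC (T - {j0}) \<noteq> 0" using CC_pos[of "T - {j0}"] by simp
  have "order rr (ev j0 (monT T - 1)) = order rr [:- inverse (CC (T - {j0})), 1:]"
    by (simp only: ev_fac[OF assms(1)] if_P[OF True] order_smult[OF C0])
  also have "\<dots> = (if T = S then 1 else 0)"
  proof (cases "T = S")
    case True
    then show ?thesis using order_power_n_n[of rr 1] by (simp add: rr_def)
  next
    case False
    then have "T - {j0} \<noteq> S - {j0}" using True j0S by blast
    then have "CC (T - {j0}) \<noteq> CC (S - {j0})" using CC_inj[of "T - {j0}" "S - {j0}"] assms(1) fS by auto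
    then have "poly [:- inverse (CC (T - {j0})), 1:] rr \<noteq> 0"
      using C0 CC_pos[of "S - {j0}"] by (simp add: rr_def)
    then show ?thesis using False by (simp add: order_0I)
  qed
  finally show ?thesis .
next
  case False
  then have "T \<noteq> S" using j0S by blast
  moreover have "CC T \<noteq> 1" using CC_ne1 assms by blast
  ultimately show ?thesis using False assms by (simp add: ev_fac order_0I)
qed

lemma ev_mono_poly: "poly (ev j0 (mono e A)) rr \<noteq> 0"
proof -
  have "ev j0 (mono e A) = (\<Prod>j\<in>A. psi j0 j ^ e j)"
    by (simp add: mono_def geval_prod[OF rhom_pCons] geval_power[OF rhom_pCons] geval_Var[OF rhom_pCons])
  moreover have "poly (psi j0 j) rr \<noteq> 0" for j
    using rr_ne0 cc_ne0 by (simp add: psi_def)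
  ultimately show ?thesis by (cases "finite A") (simp_all add: poly_prod prod_zero_iff)
qed

end

definition AA :: "nat \<Rightarrow> nat set set" where "AA n = {T. T \<subseteq> {1..n} \<and> T \<noteq> {}}"

lemma AA_fin: "finite (AA n)"
  by (rule finite_subset[of _ "Pow {1..n}"]) (auto simp: AA_def)

lemma AA_mem: "T \<in> AA n \<Longrightarrow> finite T \<and> T \<noteq> {}"
  by (auto simp: AA_def intro: finite_subset)

definition NN :: "nat \<Rightarrow> (nat set \<Rightarrow> int) \<Rightarrow> mpoly" where
  "NN n f = (\<Prod>T\<in>AA n. (monT T - 1) ^ nat (f T))"
definition DD :: "nat \<Rightarrow> (nat set \<Rightarrow> int) \<Rightarrow> mpoly" where
  "DD n f = (\<Prod>T\<in>AA n. (monT T - 1) ^ nat (- f T))"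

lemma fac_ne0: "T \<in> AA n \<Longrightarrow> monT T - 1 \<noteq> (0::mpoly)"
  using monT_ne1 AA_mem by force

lemma NN_ne0: "NN n f \<noteq> 0" and DD_ne0: "DD n f \<noteq> 0"
  using fac_ne0 AA_fin by (auto simp: NN_def DD_def prod_zero_iff)

lemma Fract_power: "Fract p q ^ k = Fract (p ^ k) (q ^ k)"
  by (induction k) (simp_all add: One_fract_def)

lemma powi_Fract: "p \<noteq> 0 \<Longrightarrow> Fract p 1 powi k = Fract (p ^ nat k) (p ^ nat (- k))"
  by (cases "k \<ge> 0") (simp_all add: power_int_def Fract_power)

lemma prod_Fract: "finite A \<Longrightarrow> (\<And>x. x \<in> A \<Longrightarrow> b x \<noteq> 0) \<Longrightarrow>
    (\<Prod>x\<in>A. Fract (a x) (b x)) = Fract (\<Prod>x\<in>A. a x) (\<Prod>x\<in>A. b x)"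
  by (induction A rule: finite_induct) (simp_all add: One_fract_def)

lemma phi1_NN: "f \<in> FF n \<Longrightarrow> phi1 f = Fract (NN n f) (DD n f)"
proof -
  assume f: "f \<in> FF n"
  have "phi1 f = (\<Prod>T\<in>AA n. w T powi f T)"
    by (rule phi1_superset[OF AA_fin]) (use FF_supp[OF f] in \<open>auto simp: AA_def\<close>)
  also have "\<dots> = (\<Prod>T\<in>AA n. Fract ((monT T - 1) ^ nat (f T)) ((monT T - 1) ^ nat (- f T)))"
    by (rule prod.cong[OF refl]) (simp add: w_def poly_to_rf_def powi_Fract[OF fac_ne0])
  also have "\<dots> = Fract (NN n f) (DD n f)"
    unfolding NN_def DD_def by (rule prod_Fract[OF AA_fin]) (use fac_ne0 in auto)
  finally show ?thesis .
qed


lemma order_facprod: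
  assumes S: "S \<in> AA n" and j0: "j0 \<in> S"
  shows "order (rr S j0) (ev j0 (\<Prod>T\<in>AA n. (monT T - 1) ^ k T)) = k S"
    and "ev j0 (\<Prod>T\<in>AA n. (monT T - 1) ^ k T) \<noteq> 0"
proof -
  have fS: "finite S" using AA_mem[OF S] by simp
  have e: "ev j0 (\<Prod>T\<in>AA n. (monT T - 1) ^ k T) = (\<Prod>T\<in>AA n. ev j0 (monT T - 1) ^ k T)"
    by (simp add: geval_prod[OF rhom_pCons] geval_power[OF rhom_pCons])
  have ne: "ev j0 (monT T - 1) \<noteq> 0" if "T \<in> AA n" for T
    using ev_fac_ne0[OF fS j0] AA_mem[OF that] by blast
  have "order (rr S j0) (\<Prod>T\<in>AA n. ev j0 (monT T - 1) ^ k T) = (\<Sum>T\<in>AA n. k T * order (rr S j0) (ev j0 (monT T - 1)))"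
    by (rule order_prod_pow[OF AA_fin ne])
  also have "\<dots> = (\<Sum>T\<in>AA n. if T = S then k T else 0)"
    by (rule sum.cong[OF refl]) (simp add: order_fac[OF fS j0] AA_mem)
  also have "\<dots> = k S" using S AA_fin by simp
  finally show "order (rr S j0) (ev j0 (\<Prod>T\<in>AA n. (monT T - 1) ^ k T)) = k S" by (simp only: e)
  show "ev j0 (\<Prod>T\<in>AA n. (monT T - 1) ^ k T) \<noteq> 0"
    unfolding e using ne AA_fin by (simp add: prod_zero_iff)
qed

lemma ev_mono_ne0: "finite S \<Longrightarrow> j0 \<in> S \<Longrightarrow> ev j0 (mono e A) \<noteq> 0"
  using ev_mono_poly[of S j0 e A] by auto

lemma ev_mono_order: "finite S \<Longrightarrow> j0 \<in> S \<Longrightarrow> order (rr S j0) (ev j0 (mono e A)) = 0"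
  using ev_mono_poly[of S j0 e A] by (simp add: order_0I)

lemma x_power_order: "order 0 ([:0, 1::rat:] ^ a) = a"
  using order_power_n_n[of "0::rat" a] by simp

lemma ev2_mono:
  assumes "finite A" "j \<in> A"
  shows "geval (\<lambda>c. [:c:]) (\<lambda>k. if k = j then [:0, 1:] else 1) (mono e A) = [:0, 1::rat:] ^ e j"
proof -
  have "geval (\<lambda>c. [:c:]) (\<lambda>k. if k = j then [:0, 1:] else 1) (mono e A) = (\<Prod>k\<in>A. (if k = j then [:0, 1::rat:] else 1) ^ e k)"
    by (simp add: mono_def geval_prod[OF rhom_pCons] geval_power[OF rhom_pCons] geval_Var[OF rhom_pCons])
  also have "\<dots> = (\<Prod>k\<in>A. if k = j then [:0, 1::rat:] ^ e k else 1)"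
    by (rule prod.cong) auto
  also have "\<dots> = [:0, 1::rat:] ^ e j" using assms by simp
  finally show ?thesis .
qed

lemma phiM_Fract: "x \<in> MFF n \<Longrightarrow> phiM x = Fract (mono (fst x) {1..n} * NN n (snd x)) (DD n (snd x))"
  by (auto simp: phiM_split phi1_NN poly_to_rf_def MFF_def)

lemma inj_phiM: "inj_on phiM (MFF n)"
proof (rule inj_onI)
  fix x y assume x: "x \<in> MFF n" and y: "y \<in> MFF n" and eq: "phiM x = phiM y"
  obtain e f where xe: "x = (e, f)" "e \<in> Mon n" "f \<in> FF n" using x by (auto simp: MFF_def)
  obtain e' f' where ye: "y = (e', f')" "e' \<in> Mon n" "f' \<in> FF n" using y by (auto simp: MFF_def)
  have H: "mono e {1..n} * NN n f * DD n f' = mono e' {1..n} * NN n f' * DD n f"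
    using eq phiM_Fract[OF x] phiM_Fract[OF y] xe ye by (simp add: eq_fract DD_ne0)
  have ff: "f = f'"
  proof
    fix S
    show "f S = f' S"
    proof (cases "S \<in> AA n")
      case False
      have "f S = 0"
      proof (rule ccontr)
        assume "f S \<noteq> 0" then have "S \<in> AA n" using FF_supp[OF xe(3)] by (simp add: AA_def)
        then show False using False by simp
      qed
      moreover have "f' S = 0"
      proof (rule ccontr)
        assume "f' S \<noteq> 0" then have "S \<in> AA n" using FF_supp[OF ye(3)] by (simp add: AA_def)
        then show False using False by simp
      qed
      ultimately show ?thesis by simp
    next
      case True
      then obtain j0 where j0: "j0 \<in> S" by (auto simp: AA_def)
      have fS: "finite S" using AA_mem[OF True] by simp
      let ?r = "rr S j0"
      let ?ev = "ev j0"
      have E: "?ev (mono e {1..n}) * ?ev (NN n f) * ?ev (DD n f') = ?ev (mono e' {1..n}) * ?ev (NN n f') * ?ev (DD n f)"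
        using arg_cong[OF H, of ?ev] by (simp add: geval_mult[OF rhom_pCons])
      note o1 = order_facprod[OF True j0, of "\<lambda>T. nat (f T)", folded NN_def]
      note o2 = order_facprod[OF True j0, of "\<lambda>T. nat (- f T)", folded DD_def]
      note o3 = order_facprod[OF True j0, of "\<lambda>T. nat (f' T)", folded NN_def]
      note o4 = order_facprod[OF True j0, of "\<lambda>T. nat (- f' T)", folded DD_def]
      have "order ?r (?ev (mono e {1..n}) * ?ev (NN n f) * ?ev (DD n f')) = nat (f S) + nat (- f' S)"
        using o1 o4 ev_mono_ne0[OF fS j0] ev_mono_order[OF fS j0] by (simp add: order_mult)
      moreover have "order ?r (?ev (mono e' {1..n}) * ?ev (NN n f') * ?ev (DD n f)) = nat (f' S) + nat (- f S)"
        using o2 o3 ev_mono_ne0[OF fS j0] ev_mono_order[OF fS j0] by (simp add: order_mult)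
      ultimately have "nat (f S) + nat (- f' S) = nat (f' S) + nat (- f S)" using E by simp
      then show ?thesis by linarith
    qed
  qed
  have "mono e {1..n} = mono e' {1..n}"
    using H NN_ne0 DD_ne0 unfolding ff by (simp add: mult.assoc)
  have ee: "e = e'"
  proof
    fix j
    show "e j = e' j"
    proof (cases "j \<in> {1..n}")
      case False
      have "e j = 0" using Mon_supp[OF xe(2)] False by blast
      moreover have "e' j = 0" using Mon_supp[OF ye(2)] False by blast
      ultimately show ?thesis by simp
    next
      case True
      have "[:0, 1::rat:] ^ e j = [:0, 1::rat:] ^ e' j"
        using \<open>mono e {1..n} = mono e' {1..n}\<close> ev2_mono[OF finite_atLeastAtMost True] by metis
      then show ?thesis using x_power_order by metis
    qed
  qed
  show "x = y" using xe ye ff ee by simp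
qed


theorem mainTheorem17:
  shows "(\<forall>n\<ge>1. phiM ` MFF n \<subseteq> Mould1 n \<and> inj_on phiM (MFF n))
       \<and> phiM mff_unit = mould_unit
       \<and> (\<forall>m n i x y. 1 \<le> n \<longrightarrow> 1 \<le> i \<longrightarrow> i \<le> m \<longrightarrow> x \<in> MFF m \<longrightarrow> y \<in> MFF n \<longrightarrow>
            phiM (mff_comp m i n x y) = mould_comp i n (phiM x) (phiM y))
       \<and> (\<forall>n \<sigma> x. 1 \<le> n \<longrightarrow> \<sigma> permutes {1..n} \<longrightarrow> x \<in> MFF n \<longrightarrow>
            phiM (mff_act \<sigma> x) = mould_act \<sigma> (phiM x))"
proof (intro conjI allI impI)
  fix n :: nat
  show "phiM ` MFF n \<subseteq> Mould1 n" using phiM_Mould1 by blast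
  show "inj_on phiM (MFF n)" by (rule inj_phiM)
next
  show "phiM mff_unit = mould_unit" by (rule unit_ok)
next
  fix m n i :: nat and x y
  assume "1 \<le> n" "1 \<le> i" "i \<le> m" "x \<in> MFF m" "y \<in> MFF n"
  then show "phiM (mff_comp m i n x y) = mould_comp i n (phiM x) (phiM y)"
    by (rule comp_main)
next
  fix n :: nat and \<sigma> x
  assume "\<sigma> permutes {1..n}" "x \<in> MFF n"
  then show "phiM (mff_act \<sigma> x) = mould_act \<sigma> (phiM x)"
    by (rule act_main)
qed

end
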